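(* Let $f\in H^1_\mathscr{D}(\mathbb{R}^d)$. Then $$\|f\|_{H^1_\mathscr{D}}\eqsim \sup_{\mathcal{S}\text{ sparse}}\|\mathcal{M}_\mathcal{S}f\|_{L^1(\mathbb{R}^d)}\eqsim \sup_{\mathcal{S}\text{ sparse}}\|\mathcal{A}_\mathcal{S}f\|_{L^1(\mathbb{R}^d)},$$ where the suprema run over all sparse families $\mathcal{S}\subset\mathscr{D}$ and the implicit constants are independent of $f$.
   Context: $\mathscr{D}$ is the standard dyadic grid on $\mathbb{R}^d$, $\langle f\rangle_Q=\frac1{|Q|}\int_Qf$, $\mathcal{M}_\mathscr{D}f(x)=\sup_{x\in Q\in\mathscr{D}}|\langle f\rangle_Q|$, and $H^1_\mathscr{D}(\mathbb{R}^d)$ is the space of locally integrable $f$ with $\|f\|_{H^1_\mathscr{D}}:=\|\mathcal{M}_\mathscr{D}f\|_{L^1}<\infty$. A family $\mathcal{S}\subset\mathscr{D}$ is sparse if for every $Q\in\mathcal{S}$, $|Q\setminus\bigcup_{R\in\mathcal{S},R\subsetneq Q}R|\ge\frac12|Q|$. For such $\mathcal{S}$, $\mathcal{M}_\mathcal{S}f(x)=\sup_{Q\in\mathcal{S}}|\langle f\rangle_Q|\mathbf{1}_Q(x)$ and $\mathcal{A}_\mathcal{S}f(x)=\sum_{Q\in\mathcal{S}}|\langle f\rangle_Q|\mathbf{1}_Q(x)$. *)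

theory Defs
  imports "HOL-Analysis.Analysis"
begin

definition dcube :: "int \<Rightarrow> ('n::finite \<Rightarrow> int) \<Rightarrow> (real^'n) set" where
  "dcube j k = {x. \<forall>i. real_of_int (k i) * 2 powr (real_of_int j) \<le> x $ i
                      \<and> x $ i < (real_of_int (k i) + 1) * 2 powr (real_of_int j)}"

definition dyadic_grid :: "(real^'n::finite) set set" where
  "dyadic_grid = {dcube j k | j k. True}"

definition loc_integrable :: "(real^'n::finite \<Rightarrow> real) \<Rightarrow> bool" where
  "loc_integrable f \<longleftrightarrow> (\<forall>K. compact K \<longrightarrow> set_integrable lborel K f)"

definition avg :: "(real^'n::finite \<Rightarrow> real) \<Rightarrow> (real^'n) set \<Rightarrow> real" where
  "avg f Q = (LINT x:Q|lborel. f x) / measure lborel Q"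

definition dyadic_max :: "(real^'n::finite \<Rightarrow> real) \<Rightarrow> real^'n \<Rightarrow> ennreal" where
  "dyadic_max f x = (SUP Q\<in>{Q\<in>dyadic_grid. x \<in> Q}. ennreal \<bar>avg f Q\<bar>)"

definition H1_norm :: "(real^'n::finite \<Rightarrow> real) \<Rightarrow> ennreal" where
  "H1_norm f = (\<integral>\<^sup>+ x. dyadic_max f x \<partial>lborel)"

definition sparse :: "(real^'n::finite) set set \<Rightarrow> bool" where
  "sparse S \<longleftrightarrow> S \<subseteq> dyadic_grid \<and>
     (\<forall>Q\<in>S. measure lborel (Q - \<Union>{R\<in>S. R \<subset> Q}) \<ge> measure lborel Q / 2)"

definition sparse_max :: "(real^'n::finite) set set \<Rightarrow> (real^'n \<Rightarrow> real) \<Rightarrow> real^'n \<Rightarrow> ennreal" where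
  "sparse_max S f x = (SUP Q\<in>S. ennreal \<bar>avg f Q\<bar> * indicator Q x)"

text \<open>Sparse operator: the (unordered, nonnegative) sum over S, i.e. the supremum of finite partial sums.\<close>
definition sparse_op :: "(real^'n::finite) set set \<Rightarrow> (real^'n \<Rightarrow> real) \<Rightarrow> real^'n \<Rightarrow> ennreal" where
  "sparse_op S f x = (SUP F\<in>{F. finite F \<and> F \<subseteq> S}. \<Sum>Q\<in>F. ennreal \<bar>avg f Q\<bar> * indicator Q x)"

definition sup_sparse_max :: "(real^'n::finite \<Rightarrow> real) \<Rightarrow> ennreal" where
  "sup_sparse_max f = (SUP S\<in>{S. sparse S}. \<integral>\<^sup>+ x. sparse_max S f x \<partial>lborel)"

definition sup_sparse_op :: "(real^'n::finite \<Rightarrow> real) \<Rightarrow> ennreal" where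
  "sup_sparse_op f = (SUP S\<in>{S. sparse S}. \<integral>\<^sup>+ x. sparse_op S f x \<partial>lborel)"

end

theory Submission
  imports Defs
begin

lemma dcube_mem: "x \<in> dcube j k \<longleftrightarrow> (\<forall>i. real_of_int (k i) * 2 powr (real_of_int j) \<le> x $ i
                      \<and> x $ i < (real_of_int (k i) + 1) * 2 powr (real_of_int j))"
  by (simp add: dcube_def)

lemma int_interval_nest:
  fixes k k' :: int and N :: int and y :: real
  assumes "N > 0" "k \<le> y" "y < k + 1" "k' * N \<le> y" "y < (k'+1) * N"
  shows "k' * N \<le> k \<and> k + 1 \<le> (k'+1) * N"
proof -
  have "k = floor y" using assms by linarith
  have a: "k' * N \<le> floor y" using assms(4) by (metis floor_le_iff of_int_mult floor_of_int le_floor_iff)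
  have "k < (k'+1)*N" using assms by (smt (verit) of_int_less_iff of_int_mult of_int_add of_int_1)
  thus ?thesis using a \<open>k = floor y\<close> by simp
qed

lemma powr_split: "j \<le> j' \<Longrightarrow> (2::real) powr (real_of_int j') = 2 powr (real_of_int j) * real_of_int (2 ^ nat (j' - j))"
proof -
  assume "j \<le> j'"
  have "(2::real) powr (real_of_int j') = 2 powr (real_of_int j + real (nat (j' - j)))" using \<open>j \<le> j'\<close> by simp
  also have "\<dots> = 2 powr (real_of_int j) * 2 ^ nat (j' - j)" by (simp add: powr_add powr_realpow)
  finally show ?thesis by simp
qed

lemma coord_nest:
  fixes x z :: real and j j' k k' :: int
  assumes "j \<le> j'" "k * 2 powr j \<le> x" "x < (real_of_int k + 1) * 2 powr j"
    "k' * 2 powr j' \<le> x" "x < (real_of_int k' + 1) * 2 powr j'"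
    "k * 2 powr j \<le> z" "z < (real_of_int k + 1) * 2 powr j"
  shows "k' * 2 powr j' \<le> z \<and> z < (real_of_int k' + 1) * 2 powr (real_of_int j')"
proof -
  define N :: int where "N = 2 ^ nat (j' - j)"
  define p where "p = (2::real) powr j"
  have p: "p > 0" by (simp add: p_def)
  have pj: "2 powr j' = p * N" using powr_split[OF assms(1)] by (simp add: p_def N_def)
  have N: "N > 0" by (simp add: N_def)
  define y where "y = x / p"
  have "k \<le> y" "y < k + 1" "k' * N \<le> y" "y < (k'+1) * N"
    using assms p unfolding y_def pj p_def[symmetric] by (simp_all add: field_simps)
  from int_interval_nest[OF N this] have h: "k' * N \<le> k" "k + 1 \<le> (k'+1) * N" by auto
  have h1: "real_of_int k' * N \<le> k" "real_of_int k + 1 \<le> (k'+1) * N"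
    using h by (metis of_int_le_iff of_int_mult, metis of_int_le_iff of_int_mult of_int_add of_int_1)
  have "k' * 2 powr j' = (k' * N) * p" using pj by simp
  also have "\<dots> \<le> k * p" using h1 p by (simp add: mult_right_mono)
  also have "\<dots> \<le> z" using assms(6) by (simp add: p_def)
  finally have 1: "k' * 2 powr j' \<le> z" .
  have "z < (k + 1) * p" using assms(7) by (simp add: p_def)
  also have "\<dots> \<le> ((k'+1) * N) * p" using h1 p by (simp add: mult_right_mono)
  also have "\<dots> = (real_of_int k' + 1) * 2 powr j'" using pj by simp
  finally show ?thesis using 1 by simp
qed

lemma dcube_nest:
  assumes "x \<in> dcube j k" "x \<in> dcube j' k'" "j \<le> j'"
  shows "dcube j k \<subseteq> dcube j' k'"
proof
  fix z assume "z \<in> dcube j k"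
  then show "z \<in> dcube j' k'" using assms coord_nest[OF assms(3)] unfolding dcube_mem by meson
qed

lemma dcube_box:
  shows "box ((\<chi> i. real_of_int (k i) * 2 powr (real_of_int j)) :: real^'n::finite) (\<chi> i. (real_of_int (k i) + 1) * 2 powr (real_of_int j)) \<subseteq> dcube j k"
   "dcube j k \<subseteq> cbox ((\<chi> i. real_of_int (k i) * 2 powr (real_of_int j)) :: real^'n::finite) (\<chi> i. (real_of_int (k i) + 1) * 2 powr (real_of_int j))"
  by (auto simp: mem_box_cart dcube_mem less_imp_le)

lemma dcube_sets[measurable]: "dcube j k \<in> sets lborel"
  unfolding dcube_def by measurable

lemma dcube_sets_borel[measurable, simp]: "dcube j k \<in> sets borel"
  using dcube_sets by simp

lemma ennreal_le_pos: "ennreal x \<le> ennreal B \<Longrightarrow> 0 < x \<Longrightarrow> x \<le> B"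
proof (cases "B \<ge> 0")
  case True thus "ennreal x \<le> ennreal B \<Longrightarrow> 0 < x \<Longrightarrow> x \<le> B" by (simp add: ennreal_le_iff)
next
  case False thus "ennreal x \<le> ennreal B \<Longrightarrow> 0 < x \<Longrightarrow> x \<le> B" by (simp add: ennreal_neg)
qed

lemma dcube_emeasure: "emeasure lborel (dcube j (k::'n::finite \<Rightarrow> int)) = ennreal ((2 powr (real_of_int j)) ^ CARD('n))"
proof -
  define a :: "real^'n" where "a = (\<chi> i. real_of_int (k i) * 2 powr (real_of_int j))"
  define b :: "real^'n" where "b = (\<chi> i. (real_of_int (k i) + 1) * 2 powr (real_of_int j))"
  have ne: "cbox a b \<noteq> {}" "box a b \<noteq> {}" 
    by (auto simp: a_def b_def box_ne_empty inner_axis Basis_vec_def)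
  have eq: "emeasure lborel (box a b) = emeasure lborel (cbox a b)"
    by (simp add: emeasure_lborel_box_eq emeasure_lborel_cbox_eq)
  have c: "emeasure lborel (cbox a b) = ennreal ((2 powr (real_of_int j)) ^ CARD('n))"
    using content_cbox_cart[OF ne(1)] emeasure_lborel_cbox_finite[of a b]
    by (simp add: a_def b_def emeasure_eq_ennreal_measure algebra_simps)
  have "emeasure lborel (box a b) \<le> emeasure lborel (dcube j k)"
    unfolding a_def b_def using dcube_box dcube_sets by (intro emeasure_mono) auto
  moreover have "emeasure lborel (dcube j k) \<le> emeasure lborel (cbox a b)"
    unfolding a_def b_def by (intro emeasure_mono dcube_box) auto
  ultimately show ?thesis using eq c by simp
qed

lemma dcube_ne: "(\<chi> i. real_of_int (k i) * 2 powr (real_of_int j)) \<in> dcube j k"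
  by (simp add: dcube_mem)

lemma dcube_level_mono:
  assumes "dcube j k \<subseteq> dcube j' (k'::'n::finite \<Rightarrow> int)" shows "j \<le> j'"
proof -
  have "emeasure lborel (dcube j k) \<le> emeasure lborel (dcube j' k')"
    using assms by (intro emeasure_mono) auto
  hence "(2 powr (real_of_int j)) ^ CARD('n) \<le> (2 powr (real_of_int j')) ^ CARD('n)"
    by (simp add: dcube_emeasure)
  hence "2 powr (real_of_int j) \<le> 2 powr (real_of_int j')"
    by (subst (asm) power_mono_iff) auto
  thus ?thesis by simp
qed

lemma dcube_same_level:
  assumes "x \<in> dcube j k" "x \<in> dcube j k'" shows "dcube j k = dcube j k'"
  using dcube_nest[OF assms] dcube_nest[OF assms(2,1)] by auto

lemma grid_sets[measurable]: "Q \<in> dyadic_grid \<Longrightarrow> Q \<in> sets lborel"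
  by (auto simp: dyadic_grid_def)

lemma grid_sets_borel[measurable]: "Q \<in> dyadic_grid \<Longrightarrow> Q \<in> sets borel"
  by (auto simp: dyadic_grid_def)

lemma grid_countable: "countable (dyadic_grid :: (real^'n::finite) set set)"
proof -
  have e: "(dyadic_grid :: (real^'n) set set) = (\<lambda>(j,k). dcube j k) ` (UNIV \<times> UNIV)"
    by (auto simp: dyadic_grid_def)
  have c1: "countable (PiE (UNIV::'n set) (\<lambda>_. UNIV::int set))"
    by (rule countable_PiE) (auto intro: countableI_type)
  hence c1': "countable (UNIV :: ('n \<Rightarrow> int) set)" by simp
  have c2: "countable (UNIV :: int set)" by (rule countableI_type)
  have "countable ((UNIV :: int set) \<times> (UNIV :: ('n \<Rightarrow> int) set))"
    using c1' c2 by (intro countable_SIGMA)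
  thus ?thesis unfolding e by (rule countable_image)
qed

lemma grid_nest:
  assumes "Q \<in> dyadic_grid" "R \<in> dyadic_grid" "x \<in> Q" "x \<in> R"
  shows "Q \<subseteq> R \<or> R \<subseteq> Q"
proof -
  obtain j k j' k' where "Q = dcube j k" "R = dcube j' k'" using assms by (auto simp: dyadic_grid_def)
  thus ?thesis using dcube_nest[of x j k j' k'] dcube_nest[of x j' k' j k] assms by (cases "j \<le> j'") auto
qed

lemma grid_fin: "Q \<in> dyadic_grid \<Longrightarrow> emeasure lborel Q < \<infinity>"
  by (auto simp: dyadic_grid_def dcube_emeasure)

lemma int_lt_2powr: "j \<ge> 1 \<Longrightarrow> real_of_int j < 2 powr (real_of_int j)"
proof -
  assume "j \<ge> 1"
  then obtain n where n: "j = int n" by (metis nonneg_int_cases zero_le_one order_trans)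
  have "real n < 2 ^ n" by (metis of_nat_less_two_power)
  thus ?thesis using n by (simp add: powr_realpow)
qed

lemma grid_maximal:
  assumes "Q \<in> (dyadic_grid :: (real^'n::finite) set set)" "P Q"
    "\<And>R. R \<in> dyadic_grid \<Longrightarrow> P R \<Longrightarrow> emeasure lborel R \<le> ennreal B"
  shows "\<exists>R\<in>dyadic_grid. P R \<and> Q \<subseteq> R \<and> (\<forall>R'\<in>dyadic_grid. P R' \<and> R \<subseteq> R' \<longrightarrow> R' = R)"
proof -
  obtain j0 k0 where Q: "Q = dcube j0 k0" using assms by (auto simp: dyadic_grid_def)
  define L where "L = {j. \<exists>k. P (dcube j k) \<and> Q \<subseteq> dcube j k}"
  have j0L: "j0 \<in> L" using assms Q by (auto simp: L_def)
  have Lb: "j \<le> max 1 (ceiling B)" if "j \<in> L" for j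
  proof (rule ccontr)
    assume "\<not> ?thesis"
    hence j1: "j \<ge> 1" "real_of_int j > B" by (auto simp: not_le ceiling_less_iff)
    from that obtain k where k: "P (dcube j k)" by (auto simp: L_def)
    have "dcube j k \<in> dyadic_grid" by (auto simp: dyadic_grid_def)
    from assms(3)[OF this k] have "ennreal ((2 powr (real_of_int j)) ^ CARD('n)) \<le> ennreal B"
      by (simp add: dcube_emeasure)
    moreover have "2 powr (real_of_int j) \<le> (2 powr (real_of_int j)) ^ CARD('n)"
    proof -
      have "(2 powr (real_of_int j)) ^ 1 \<le> (2 powr (real_of_int j)) ^ CARD('n)"
        using j1 by (intro power_increasing) (auto simp: ge_one_powr_ge_zero)
      thus ?thesis by simp
    qed
    moreover have "real_of_int j < 2 powr (real_of_int j)" using int_lt_2powr j1 by auto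
    ultimately show False using j1 ennreal_le_pos[of "(2 powr (real_of_int j)) ^ CARD('n)" B] by simp
  qed
  have Lb2: "j0 \<le> j" if "j \<in> L" for j
    using that Q by (auto simp: L_def intro: dcube_level_mono)
  have finL: "finite L"
    by (rule finite_subset[of _ "{j0..max 1 (ceiling B)}"]) (use Lb Lb2 in auto)
  define J where "J = Max L"
  have JL: "J \<in> L" using finL j0L unfolding J_def by (intro Max_in) auto
  then obtain kJ where kJ: "P (dcube J kJ)" "Q \<subseteq> dcube J kJ" by (auto simp: L_def)
  show ?thesis
  proof (intro bexI[of _ "dcube J kJ"] conjI ballI impI)
    fix R' assume R': "R' \<in> dyadic_grid" "P R' \<and> dcube J kJ \<subseteq> R'"
    then obtain j' k' where R'eq: "R' = dcube j' k'" by (auto simp: dyadic_grid_def)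
    have "j' \<in> L" using R' R'eq kJ by (auto simp: L_def)
    hence "j' \<le> J" using finL by (simp add: J_def)
    moreover have "J \<le> j'" using R' R'eq by (auto intro: dcube_level_mono)
    ultimately have "j' = J" by simp
    moreover have "(\<chi> i. real_of_int (kJ i) * 2 powr (real_of_int J)) \<in> R'" using R' dcube_ne by blast
    ultimately show "R' = dcube J kJ" using R'eq dcube_same_level dcube_ne by metis
  qed (use kJ in \<open>auto simp: dyadic_grid_def\<close>)
qed



definition tt :: "int \<Rightarrow> ennreal" where "tt k = ennreal (4 powr (real_of_int k))"

lemma tt_pos: "tt k > 0" by (simp add: tt_def)
lemma tt_fin: "tt k < \<infinity>" by (simp add: tt_def)
lemma tt_Suc: "tt (k+1) = 4 * tt k"
  by (simp add: tt_def powr_add ennreal_mult' mult.commute)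
lemma tt_mono: "k \<le> k' \<Longrightarrow> tt k \<le> tt k'"
  by (simp add: tt_def)

lemma geo_sum: "(\<integral>\<^sup>+k. tt k * indicator {..K} k \<partial>count_space UNIV) = ennreal (4/3 * 4 powr (real_of_int K))"
proof -
  have b: "bij_betw (\<lambda>n::nat. K - int n) UNIV {..K}"
    by (rule bij_betwI[where g="\<lambda>k. nat (K - k)"]) auto
  have "(\<integral>\<^sup>+k. tt k * indicator {..K} k \<partial>count_space UNIV) = (\<integral>\<^sup>+k. tt k \<partial>count_space {..K})"
    by (simp add: nn_integral_count_space_indicator)
  also have "\<dots> = (\<integral>\<^sup>+n. tt (K - int n) \<partial>count_space UNIV)"
    by (rule nn_integral_bij_count_space[OF b, symmetric])
  also have "\<dots> = (\<Sum>n. ennreal (4 powr (real_of_int K) * (1/4)^n))"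
  proof -
    have "tt (K - int n) = ennreal (4 powr (real_of_int K) * (1/4)^n)" for n
    proof -
      have e: "real_of_int (K - int n) = real_of_int K - real n" by simp
      have "(4::real) powr (real_of_int (K - int n)) = 4 powr (real_of_int K) / 4 powr (real n)"
        unfolding e by (rule powr_diff)
      also have "\<dots> = 4 powr (real_of_int K) / 4 ^ n"
        by (subst powr_realpow) auto
      also have "\<dots> = 4 powr (real_of_int K) * (1/4)^n"
        by (simp only: power_one_over divide_inverse mult_1 power_inverse)
      finally show ?thesis by (simp add: tt_def)
    qed
    thus ?thesis by (simp add: nn_integral_count_space_nat)
  qed
  also have "\<dots> = ennreal (\<Sum>n. 4 powr (real_of_int K) * (1/4)^n)"
    by (rule suminf_ennreal2) (auto intro!: summable_mult summable_geometric)
  also have "(\<Sum>n. 4 powr (real_of_int K) * (1/4::real)^n) = 4 powr (real_of_int K) * (4/3)"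
  proof -
    have g: "(\<Sum>n. (1/4::real)^n) = 4/3" by (subst suminf_geometric) auto
    have "(\<Sum>n. 4 powr (real_of_int K) * (1/4::real)^n) = 4 powr (real_of_int K) * (\<Sum>n. (1/4::real)^n)"
      by (rule suminf_mult) (auto intro!: summable_geometric)
    thus ?thesis using g by simp
  qed
  finally show ?thesis by (simp add: mult.commute)
qed

lemma tt_less_iff: "r > 0 \<Longrightarrow> tt k < ennreal r \<longleftrightarrow> k \<le> ceiling (log 4 r) - 1"
proof -
  assume r: "r > 0"
  have "tt k < ennreal r \<longleftrightarrow> 4 powr (real_of_int k) < r" by (simp add: tt_def ennreal_less_iff)
  also have "\<dots> \<longleftrightarrow> real_of_int k < log 4 r" using r by (simp add: powr_less_iff)
  also have "\<dots> \<longleftrightarrow> k \<le> ceiling (log 4 r) - 1" by linarith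
  finally show ?thesis .
qed

lemma ceil_log_bounds: "r > 0 \<Longrightarrow> 4 powr (real_of_int (ceiling (log 4 r) - 1)) < r \<and> r \<le> 4 powr (real_of_int (ceiling (log 4 r)))"
proof -
  assume r: "r > 0"
  have a: "real_of_int (ceiling (log 4 r) - 1) < log 4 r" by linarith
  have b: "log 4 r \<le> real_of_int (ceiling (log 4 r))" by linarith
  have "4 powr (real_of_int (ceiling (log 4 r) - 1)) < r"
    using a r by (subst powr_less_iff) auto
  moreover have "r \<le> 4 powr (real_of_int (ceiling (log 4 r)))"
    using b r by (subst le_powr_iff) auto
  ultimately show ?thesis by blast
qed

lemma geo_upper: "(\<integral>\<^sup>+k. tt k * indicator {k. tt k < s} k \<partial>count_space UNIV) \<le> 4/3 * s"
proof (cases s)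
  case (real r)
  show ?thesis
  proof (cases "r > 0")
    case False
    hence "s = 0" using real by simp
    hence "{k. tt k < s} = {}" by simp
    thus ?thesis by simp
  next
    case True
    define K where "K = ceiling (log 4 r) - 1"
    have "{k. tt k < s} = {..K}"
    proof (rule set_eqI)
      fix k show "k \<in> {k. tt k < s} \<longleftrightarrow> k \<in> {..K}"
        by (simp only: mem_Collect_eq atMost_iff real tt_less_iff[OF True] K_def)
    qed
    hence "(\<integral>\<^sup>+k. tt k * indicator {k. tt k < s} k \<partial>count_space UNIV) = ennreal (4/3 * 4 powr (real_of_int K))"
      using geo_sum by metis
    also have "\<dots> \<le> ennreal (4/3 * r)"
      using ceil_log_bounds[OF True] unfolding K_def by (intro ennreal_leI) auto
    also have "\<dots> = 4/3 * s"
    proof -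
      have e1: "ennreal (4/3*r) = ennreal (4/3) * ennreal r" by (rule ennreal_mult) (use True in auto)
      have e2: "ennreal (4/3) = 4/3" by (metis divide_ennreal ennreal_numeral zero_less_numeral zero_le_numeral)
      show ?thesis using e1 e2 real by simp
    qed
    finally show ?thesis .
  qed
next
  case top
  thus ?thesis by (simp add: ennreal_mult_top)
qed

lemma geo_lower_aux: "ennreal (4 * 4 powr (real_of_int K)) \<le> 3 * (\<integral>\<^sup>+k. tt k * indicator {k. tt k < s} k \<partial>count_space UNIV)"
  if "\<And>k. k \<le> K \<Longrightarrow> tt k < s" for K s
proof -
  have "(\<integral>\<^sup>+k. tt k * indicator {..K} k \<partial>count_space UNIV) \<le> (\<integral>\<^sup>+k. tt k * indicator {k. tt k < s} k \<partial>count_space UNIV)"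
    by (intro nn_integral_mono) (auto simp: indicator_def that)
  hence "3 * ennreal (4/3 * 4 powr (real_of_int K)) \<le> 3 * (\<integral>\<^sup>+k. tt k * indicator {k. tt k < s} k \<partial>count_space UNIV)"
    by (simp only: geo_sum) (rule mult_left_mono, auto)
  moreover have "3 * ennreal (4/3 * 4 powr (real_of_int K)) = ennreal (4 * 4 powr (real_of_int K))"
  proof -
    have "ennreal (3 * (4/3 * 4 powr (real_of_int K))) = ennreal 3 * ennreal (4/3 * 4 powr (real_of_int K))"
      by (rule ennreal_mult) auto
    moreover have "3 * (4/3 * 4 powr (real_of_int K)) = (4 * 4 powr (real_of_int K) :: real)" by simp
    ultimately show ?thesis by simp
  qed
  ultimately show ?thesis by simp
qed

lemma geo_lower: "s \<le> 3 * (\<integral>\<^sup>+k. tt k * indicator {k. tt k < s} k \<partial>count_space UNIV)"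
proof (cases s)
  case (real r)
  show ?thesis
  proof (cases "r > 0")
    case False
    hence "s = 0" using real by simp
    thus ?thesis by simp
  next
    case True
    define K where "K = ceiling (log 4 r) - 1"
    have lt: "tt k < s" if "k \<le> K" for k
      by (simp only: real tt_less_iff[OF True] K_def[symmetric] that)
    have K1: "K + 1 = ceiling (log 4 r)" by (simp add: K_def)
    have "s \<le> ennreal (4 powr (real_of_int (K + 1)))"
      using ceil_log_bounds[OF True] unfolding K1 real by (intro ennreal_leI) auto
    also have "\<dots> = ennreal (4 * 4 powr (real_of_int K))"
      by (simp add: powr_add)
    also have "\<dots> \<le> 3 * (\<integral>\<^sup>+k. tt k * indicator {k. tt k < s} k \<partial>count_space UNIV)"
      by (rule geo_lower_aux) (rule lt)
    finally show ?thesis .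
  qed
next
  case top
  define I where "I = 3 * (\<integral>\<^sup>+k. tt k * indicator {k. tt k < s} k \<partial>count_space UNIV)"
  have big: "ennreal (4 * 4 powr (real_of_int K)) \<le> I" for K
    unfolding I_def by (rule geo_lower_aux) (use tt_fin in \<open>simp add: top\<close>)
  have "I = \<infinity>"
  proof (cases I)
    case (real y)
    have y1: "y + 1 > 0" using real by simp
    define K where "K = ceiling (log 4 (y+1))"
    have "y + 1 \<le> 4 powr (real_of_int K)" using ceil_log_bounds[OF y1] by (simp add: K_def)
    moreover have "(0::real) \<le> 4 powr (real_of_int K)" by simp
    ultimately have "y < 4 * 4 powr (real_of_int K)" by linarith
    hence "ennreal y < ennreal (4 * 4 powr (real_of_int K))" using real by (subst ennreal_less_iff) auto
    with big[of K] real show ?thesis by (metis leD)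
  qed simp
  thus ?thesis by (simp add: I_def)
qed



definition MD :: "((real^'n::finite) set \<Rightarrow> ennreal) \<Rightarrow> (real^'n) set set \<Rightarrow> real^'n \<Rightarrow> ennreal" where
  "MD a S x = (SUP Q\<in>S. a Q * indicator Q x)"

definition EE :: "((real^'n::finite) set \<Rightarrow> ennreal) \<Rightarrow> int \<Rightarrow> (real^'n) set" where
  "EE a k = {x. tt k < MD a dyadic_grid x}"

definition Pk :: "((real^'n::finite) set \<Rightarrow> ennreal) \<Rightarrow> int \<Rightarrow> (real^'n) set \<Rightarrow> bool" where
  "Pk a k Q \<longleftrightarrow> Q \<in> dyadic_grid \<and> tt k < a Q"

definition Mx :: "((real^'n::finite) set \<Rightarrow> ennreal) \<Rightarrow> int \<Rightarrow> (real^'n) set set" where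
  "Mx a k = {Q. Pk a k Q \<and> (\<forall>R. Pk a k R \<and> Q \<subseteq> R \<longrightarrow> R = Q)}"

definition Gd :: "((real^'n::finite) set \<Rightarrow> ennreal) \<Rightarrow> int \<Rightarrow> (real^'n) set set" where
  "Gd a k = {Q \<in> Mx a k. measure lborel (Q \<inter> EE a (k+1)) \<le> measure lborel Q / 2}"

definition Bd :: "((real^'n::finite) set \<Rightarrow> ennreal) \<Rightarrow> int \<Rightarrow> (real^'n) set set" where
  "Bd a k = Mx a k - Gd a k"

definition SS :: "((real^'n::finite) set \<Rightarrow> ennreal) \<Rightarrow> (real^'n) set set" where
  "SS a = (\<Union>k. Gd a k)"

lemma countable_grid_subset: "C \<subseteq> dyadic_grid \<Longrightarrow> countable C"
  using grid_countable countable_subset by blast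

lemma union_grid_sets: "C \<subseteq> dyadic_grid \<Longrightarrow> \<Union>C \<in> sets lborel"
  by (rule sets.countable_Union) (auto intro: countable_grid_subset grid_sets)

lemma MD_meas[measurable]: "S \<subseteq> dyadic_grid \<Longrightarrow> MD a S \<in> borel_measurable lborel"
  unfolding MD_def
  by (rule borel_measurable_SUP) (auto intro: countable_grid_subset grid_sets)

lemma EE_union: "EE a k = \<Union>{Q. Pk a k Q}"
proof -
  have "x \<in> EE a k \<longleftrightarrow> (\<exists>Q. Pk a k Q \<and> x \<in> Q)" for x
    by (auto simp: EE_def MD_def Pk_def less_SUP_iff indicator_def)
  thus ?thesis by auto
qed

lemma EE_sets[measurable]: "EE a k \<in> sets lborel"
  unfolding EE_union by (rule union_grid_sets) (auto simp: Pk_def)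

lemma EE_sets_borel[measurable, simp]: "EE a k \<in> sets borel"
  using EE_sets by simp

lemma Pk_sub_EE: "Pk a k Q \<Longrightarrow> Q \<subseteq> EE a k"
  unfolding EE_union by auto

lemma EE_markov: "tt k * emeasure lborel (EE a k) \<le> (\<integral>\<^sup>+x. MD a dyadic_grid x \<partial>lborel)"
proof -
  have "tt k * emeasure lborel (EE a k) = (\<integral>\<^sup>+x. tt k * indicator (EE a k) x \<partial>lborel)"
    using nn_integral_cmult_indicator[OF EE_sets[of a k], of "tt k"] by (simp only:)
  also have "\<dots> \<le> (\<integral>\<^sup>+x. MD a dyadic_grid x \<partial>lborel)"
    by (intro nn_integral_mono) (auto simp: indicator_def EE_def less_imp_le)
  finally show ?thesis .
qed

lemma EE_fin:
  assumes "(\<integral>\<^sup>+x. MD a dyadic_grid x \<partial>lborel) < \<infinity>"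
  shows "emeasure lborel (EE a k) < \<infinity>"
proof (rule ccontr)
  assume "\<not> ?thesis"
  hence "emeasure lborel (EE a k) = \<infinity>" by (simp add: less_top[symmetric])
  hence "tt k * emeasure lborel (EE a k) = \<infinity>" using tt_pos[of k] by (simp add: ennreal_mult_top)
  thus False using EE_markov[of k a] assms by simp
qed

lemma Mx_cover:
  assumes "(\<integral>\<^sup>+x. MD a dyadic_grid x \<partial>lborel) < \<infinity>" "Pk a k Q"
  shows "\<exists>R\<in>Mx a k. Q \<subseteq> R"
proof -
  define B where "B = enn2real (emeasure lborel (EE a k))"
  have B: "emeasure lborel (EE a k) = ennreal B"
    using EE_fin[OF assms(1)] by (simp add: B_def ennreal_enn2real_if less_top)
  have "\<exists>R\<in>dyadic_grid. tt k < a R \<and> Q \<subseteq> R \<and> (\<forall>R'\<in>dyadic_grid. tt k < a R' \<and> R \<subseteq> R' \<longrightarrow> R' = R)"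
  proof (rule grid_maximal)
    show "Q \<in> dyadic_grid" "tt k < a Q" using assms(2) by (auto simp: Pk_def)
    fix R assume "R \<in> dyadic_grid" "tt k < a R"
    hence "R \<subseteq> EE a k" by (intro Pk_sub_EE) (simp add: Pk_def)
    hence "emeasure lborel R \<le> emeasure lborel (EE a k)" by (intro emeasure_mono) auto
    thus "emeasure lborel R \<le> ennreal B" using B by simp
  qed
  thus ?thesis by (auto simp: Mx_def Pk_def)
qed

lemma EE_Mx:
  assumes "(\<integral>\<^sup>+x. MD a dyadic_grid x \<partial>lborel) < \<infinity>"
  shows "EE a k = \<Union>(Mx a k)"
proof
  show "EE a k \<subseteq> \<Union>(Mx a k)" unfolding EE_union using Mx_cover[OF assms] by blast
  show "\<Union>(Mx a k) \<subseteq> EE a k" unfolding EE_union Mx_def by blast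
qed

lemma Mx_grid: "Mx a k \<subseteq> dyadic_grid" by (auto simp: Mx_def Pk_def)

lemma Mx_disj: "Q \<in> Mx a k \<Longrightarrow> R \<in> Mx a k \<Longrightarrow> Q \<noteq> R \<Longrightarrow> Q \<inter> R = {}"
proof (rule ccontr)
  assume a: "Q \<in> Mx a k" "R \<in> Mx a k" "Q \<noteq> R" "Q \<inter> R \<noteq> {}"
  then obtain x where "x \<in> Q" "x \<in> R" by auto
  hence "Q \<subseteq> R \<or> R \<subseteq> Q" using grid_nest a Mx_grid by blast
  thus False using a by (auto simp: Mx_def)
qed

lemma Gd_grid: "Gd a k \<subseteq> dyadic_grid" using Mx_grid by (auto simp: Gd_def)
lemma Bd_grid: "Bd a k \<subseteq> dyadic_grid" using Mx_grid by (auto simp: Bd_def)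

lemma grid_fmeas: "Q \<in> dyadic_grid \<Longrightarrow> emeasure lborel Q = ennreal (measure lborel Q)"
  using grid_fin by (intro emeasure_eq_ennreal_measure) (simp add: less_top)

lemma Bd_bound:
  assumes H: "(\<integral>\<^sup>+x. MD a dyadic_grid x \<partial>lborel) < \<infinity>"
  shows "emeasure lborel (\<Union>(Bd a k)) \<le> 2 * emeasure lborel (EE a (k+1))"
proof -
  have BdM: "Bd a k \<subseteq> Mx a k" by (auto simp: Bd_def)
  hence Bdg: "Bd a k \<subseteq> dyadic_grid" using Mx_grid by blast
  have cnt: "countable (Bd a k)" using Bdg by (rule countable_grid_subset)
  have disj: "disjoint_family_on (\<lambda>Q. Q) (Bd a k)"
    using Mx_disj BdM unfolding disjoint_family_on_def by blast
  have disj2: "disjoint_family_on (\<lambda>Q. Q \<inter> EE a (k+1)) (Bd a k)"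
    using Mx_disj BdM unfolding disjoint_family_on_def by blast
  have "emeasure lborel (\<Union>(Bd a k)) = emeasure lborel (\<Union>((\<lambda>Q. Q) ` Bd a k))" by simp
  also have "\<dots> = (\<integral>\<^sup>+Q. emeasure lborel Q \<partial>count_space (Bd a k))"
    by (rule emeasure_UN_countable[OF _ cnt disj]) (use Bdg grid_sets in blast)
  also have "\<dots> \<le> (\<integral>\<^sup>+Q. 2 * emeasure lborel (Q \<inter> EE a (k+1)) \<partial>count_space (Bd a k))"
  proof (rule nn_integral_mono)
    fix Q assume "Q \<in> space (count_space (Bd a k))"
    hence Q: "Q \<in> Bd a k" by simp
    hence Qg: "Q \<in> dyadic_grid" using Bdg by blast
    have "measure lborel Q / 2 < measure lborel (Q \<inter> EE a (k+1))"
      using Q by (auto simp: Bd_def Gd_def)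
    hence le: "measure lborel Q \<le> 2 * measure lborel (Q \<inter> EE a (k+1))" by simp
    have le1: "emeasure lborel (Q \<inter> EE a (k+1)) \<le> emeasure lborel Q" by (intro emeasure_mono) (use Qg grid_sets in auto)
    have fin2: "emeasure lborel (Q \<inter> EE a (k+1)) = ennreal (measure lborel (Q \<inter> EE a (k+1)))"
    proof -
      have "emeasure lborel (Q \<inter> EE a (k+1)) < \<infinity>" using le1 grid_fin[OF Qg] by (rule le_less_trans)
      thus ?thesis by (intro emeasure_eq_ennreal_measure) simp
    qed
    have "emeasure lborel Q = ennreal (measure lborel Q)" using grid_fmeas[OF Qg] .
    also have "\<dots> \<le> ennreal (2 * measure lborel (Q \<inter> EE a (k+1)))" using le by (rule ennreal_leI)
    also have "\<dots> = 2 * emeasure lborel (Q \<inter> EE a (k+1))" unfolding fin2 by (simp add: ennreal_mult)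
    finally show "emeasure lborel Q \<le> 2 * emeasure lborel (Q \<inter> EE a (k+1))" .
  qed
  also have "\<dots> = 2 * (\<integral>\<^sup>+Q. emeasure lborel (Q \<inter> EE a (k+1)) \<partial>count_space (Bd a k))"
    by (rule nn_integral_cmult) simp
  also have "(\<integral>\<^sup>+Q. emeasure lborel (Q \<inter> EE a (k+1)) \<partial>count_space (Bd a k)) = emeasure lborel (\<Union>Q\<in>Bd a k. Q \<inter> EE a (k+1))"
    by (rule emeasure_UN_countable[symmetric, OF _ cnt disj2]) (use Bdg grid_sets EE_sets in blast)
  also have "emeasure lborel (\<Union>Q\<in>Bd a k. Q \<inter> EE a (k+1)) \<le> emeasure lborel (EE a (k+1))"
    by (intro emeasure_mono) auto
  finally show ?thesis by (simp add: mult_left_mono)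
qed

lemma EE_split:
  assumes H: "(\<integral>\<^sup>+x. MD a dyadic_grid x \<partial>lborel) < \<infinity>"
  shows "emeasure lborel (EE a k) \<le> emeasure lborel (\<Union>(Gd a k)) + 2 * emeasure lborel (EE a (k+1))"
proof -
  have "EE a k = \<Union>(Gd a k) \<union> \<Union>(Bd a k)" using EE_Mx[OF H] by (auto simp: Bd_def Gd_def)
  hence "emeasure lborel (EE a k) \<le> emeasure lborel (\<Union>(Gd a k)) + emeasure lborel (\<Union>(Bd a k))"
    using emeasure_subadditive[OF union_grid_sets[OF Gd_grid] union_grid_sets[OF Bd_grid]] by simp
  also have "\<dots> \<le> emeasure lborel (\<Union>(Gd a k)) + 2 * emeasure lborel (EE a (k+1))"
    using Bd_bound[OF H] by (rule add_left_mono)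
  finally show ?thesis .
qed

lemma tonelli_int:
  fixes f :: "int \<Rightarrow> real^'n::finite \<Rightarrow> ennreal"
  assumes "\<And>k. f k \<in> borel_measurable lborel"
  shows "(\<integral>\<^sup>+x. (\<integral>\<^sup>+k. f k x \<partial>count_space UNIV) \<partial>lborel) = (\<integral>\<^sup>+k. (\<integral>\<^sup>+x. f k x \<partial>lborel) \<partial>count_space UNIV)"
  using assms by (intro nn_integral_count_space_nn_integral) (auto intro: countableI_type)

definition TT :: "((real^'n::finite) set \<Rightarrow> ennreal) \<Rightarrow> ennreal" where
  "TT a = (\<integral>\<^sup>+k. tt k * emeasure lborel (EE a k) \<partial>count_space UNIV)"

definition GS :: "((real^'n::finite) set \<Rightarrow> ennreal) \<Rightarrow> ennreal" where
  "GS a = (\<integral>\<^sup>+k. tt k * emeasure lborel (\<Union>(Gd a k)) \<partial>count_space UNIV)"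

lemma TT_eq: "TT a = (\<integral>\<^sup>+x. (\<integral>\<^sup>+k. tt k * indicator (EE a k) x \<partial>count_space UNIV) \<partial>lborel)"
proof -
  have "(\<integral>\<^sup>+x. (\<integral>\<^sup>+k. tt k * indicator (EE a k) x \<partial>count_space UNIV) \<partial>lborel)
      = (\<integral>\<^sup>+k. (\<integral>\<^sup>+x. tt k * indicator (EE a k) x \<partial>lborel) \<partial>count_space UNIV)"
    by (rule tonelli_int) simp
  also have "\<dots> = TT a" unfolding TT_def
    by (intro nn_integral_cong) (simp only: nn_integral_cmult_indicator[OF EE_sets])
  finally show ?thesis by simp
qed

lemma GS_eq: "GS a = (\<integral>\<^sup>+x. (\<integral>\<^sup>+k. tt k * indicator (\<Union>(Gd a k)) x \<partial>count_space UNIV) \<partial>lborel)"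
proof -
  have sets: "\<Union>(Gd a k) \<in> sets lborel" for k by (rule union_grid_sets[OF Gd_grid])
  have "(\<integral>\<^sup>+x. (\<integral>\<^sup>+k. tt k * indicator (\<Union>(Gd a k)) x \<partial>count_space UNIV) \<partial>lborel)
      = (\<integral>\<^sup>+k. (\<integral>\<^sup>+x. tt k * indicator (\<Union>(Gd a k)) x \<partial>lborel) \<partial>count_space UNIV)"
    by (rule tonelli_int) (use sets in simp)
  also have "\<dots> = GS a" unfolding GS_def
    by (intro nn_integral_cong) (simp only: nn_integral_cmult_indicator[OF sets])
  finally show ?thesis by simp
qed

lemma ind_EE: "indicator (EE a k) x = indicator {k. tt k < MD a dyadic_grid x} k"
  by (simp add: EE_def indicator_def)

lemma H_le_TT: "(\<integral>\<^sup>+x. MD a dyadic_grid x \<partial>lborel) \<le> 3 * TT a"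
proof -
  have "(\<integral>\<^sup>+x. MD a dyadic_grid x \<partial>lborel) \<le> (\<integral>\<^sup>+x. (\<integral>\<^sup>+k. 3 * (tt k * indicator (EE a k) x) \<partial>count_space UNIV) \<partial>lborel)"
  proof (rule nn_integral_mono)
    fix x
    have "MD a dyadic_grid x \<le> 3 * (\<integral>\<^sup>+k. tt k * indicator {k. tt k < MD a dyadic_grid x} k \<partial>count_space UNIV)"
      by (rule geo_lower)
    also have "\<dots> = (\<integral>\<^sup>+k. 3 * (tt k * indicator (EE a k) x) \<partial>count_space UNIV)"
      by (subst nn_integral_cmult) (simp_all add: ind_EE)
    finally show "MD a dyadic_grid x \<le> (\<integral>\<^sup>+k. 3 * (tt k * indicator (EE a k) x) \<partial>count_space UNIV)" .
  qed
  also have "\<dots> = (\<integral>\<^sup>+k. (\<integral>\<^sup>+x. 3 * (tt k * indicator (EE a k) x) \<partial>lborel) \<partial>count_space UNIV)"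
    by (rule tonelli_int) simp
  also have "\<dots> = (\<integral>\<^sup>+k. 3 * (tt k * emeasure lborel (EE a k)) \<partial>count_space UNIV)"
    by (intro nn_integral_cong) (simp add: nn_integral_cmult nn_integral_cmult_indicator[OF EE_sets])
  also have "\<dots> = 3 * TT a" unfolding TT_def by (rule nn_integral_cmult) simp
  finally show ?thesis .
qed

lemma TT_le_H: "TT a \<le> 4/3 * (\<integral>\<^sup>+x. MD a dyadic_grid x \<partial>lborel)"
proof -
  have "TT a \<le> (\<integral>\<^sup>+x. 4/3 * MD a dyadic_grid x \<partial>lborel)"
    unfolding TT_eq
  proof (rule nn_integral_mono)
    fix x show "(\<integral>\<^sup>+k. tt k * indicator (EE a k) x \<partial>count_space UNIV) \<le> 4/3 * MD a dyadic_grid x"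
      unfolding ind_EE by (rule geo_upper)
  qed
  also have "\<dots> = 4/3 * (\<integral>\<^sup>+x. MD a dyadic_grid x \<partial>lborel)"
    by (rule nn_integral_cmult) simp
  finally show ?thesis .
qed

lemma TT_le_GS:
  assumes H: "(\<integral>\<^sup>+x. MD a dyadic_grid x \<partial>lborel) < \<infinity>"
  shows "TT a \<le> 2 * GS a"
proof -
  define X where "X = (\<integral>\<^sup>+k. tt k * (2 * emeasure lborel (EE a (k+1))) \<partial>count_space UNIV)"
  have "TT a \<le> (\<integral>\<^sup>+k. tt k * emeasure lborel (\<Union>(Gd a k)) + tt k * (2 * emeasure lborel (EE a (k+1))) \<partial>count_space UNIV)"
    unfolding TT_def
    by (intro nn_integral_mono) (metis EE_split[OF H] distrib_left mult_left_mono zero_le)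
  also have "\<dots> = GS a + X" unfolding GS_def X_def by (rule nn_integral_add) simp_all
  finally have 1: "TT a \<le> GS a + X" .
  have "2 * X = (\<integral>\<^sup>+k. 2 * (tt k * (2 * emeasure lborel (EE a (k+1)))) \<partial>count_space UNIV)"
    unfolding X_def by (rule nn_integral_cmult[symmetric]) simp
  also have "\<dots> = (\<integral>\<^sup>+k. tt (k+1) * emeasure lborel (EE a (k+1)) \<partial>count_space UNIV)"
  proof (intro nn_integral_cong)
    fix k :: int
    have "2 * (tt k * (2 * emeasure lborel (EE a (k+1)))) = (2 * 2) * tt k * emeasure lborel (EE a (k+1))"
      by (simp only: mult.assoc mult.left_commute)
    also have "(2 * 2 :: ennreal) = 4" by simp
    finally show "2 * (tt k * (2 * emeasure lborel (EE a (k+1)))) = tt (k+1) * emeasure lborel (EE a (k+1))"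
      by (simp add: tt_Suc)
  qed
  also have "\<dots> = TT a" unfolding TT_def
    by (rule nn_integral_bij_count_space[where g="\<lambda>k. k+1"]) (rule bij_betwI[where g="\<lambda>k. k - 1"], auto)
  finally have 2: "2 * X = TT a" .
  have fin: "TT a < \<infinity>"
  proof -
    have "TT a \<le> 4/3 * (\<integral>\<^sup>+x. MD a dyadic_grid x \<partial>lborel)" by (rule TT_le_H)
    also have "\<dots> < \<infinity>"
    proof -
      have "(4/3::ennreal) = ennreal (4/3)" by (metis divide_ennreal ennreal_numeral zero_less_numeral zero_le_numeral)
      hence "(4/3::ennreal) < \<infinity>" by simp
      thus ?thesis using H by (simp add: ennreal_mult_less_top)
    qed
    finally show ?thesis .
  qed
  have "TT a + TT a = 2 * TT a" by (simp add: mult_2)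
  also have "\<dots> \<le> 2 * (GS a + X)" using 1 by (rule mult_left_mono) simp
  also have "\<dots> = 2 * GS a + TT a" using 2 by (simp add: distrib_left)
  finally have "TT a + TT a \<le> TT a + 2 * GS a" by (simp add: add.commute)
  hence "TT a = \<infinity> \<or> TT a \<le> 2 * GS a" by (simp add: ennreal_add_left_cancel_le)
  thus ?thesis using fin by auto
qed

lemma MS_ge: "Q \<in> S \<Longrightarrow> x \<in> Q \<Longrightarrow> a Q \<le> MD a S x"
  unfolding MD_def by (rule SUP_upper2[of Q]) auto

lemma GS_le:
  shows "GS a \<le> 4/3 * (\<integral>\<^sup>+x. MD a (SS a) x \<partial>lborel)"
proof -
  have SSg: "SS a \<subseteq> dyadic_grid" using Gd_grid by (auto simp: SS_def)
  have "GS a \<le> (\<integral>\<^sup>+x. 4/3 * MD a (SS a) x \<partial>lborel)"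
    unfolding GS_eq
  proof (rule nn_integral_mono)
    fix x
    have "(\<integral>\<^sup>+k. tt k * indicator (\<Union>(Gd a k)) x \<partial>count_space UNIV) \<le> (\<integral>\<^sup>+k. tt k * indicator {k. tt k < MD a (SS a) x} k \<partial>count_space UNIV)"
    proof (intro nn_integral_mono)
      fix k
      show "tt k * indicator (\<Union>(Gd a k)) x \<le> tt k * indicator {k. tt k < MD a (SS a) x} k"
      proof (cases "x \<in> \<Union>(Gd a k)")
        case True
        then obtain Q where Q: "Q \<in> Gd a k" "x \<in> Q" by auto
        hence "tt k < a Q" by (auto simp: Gd_def Mx_def Pk_def)
        also have "a Q \<le> MD a (SS a) x" using Q by (intro MS_ge) (auto simp: SS_def)
        finally show ?thesis using True by simp
      qed simp
    qed
    also have "\<dots> \<le> 4/3 * MD a (SS a) x" by (rule geo_upper)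
    finally show "(\<integral>\<^sup>+k. tt k * indicator (\<Union>(Gd a k)) x \<partial>count_space UNIV) \<le> 4/3 * MD a (SS a) x" .
  qed
  also have "\<dots> = 4/3 * (\<integral>\<^sup>+x. MD a (SS a) x \<partial>lborel)"
    by (rule nn_integral_cmult) (use MD_meas[OF SSg] in simp)
  finally show ?thesis .
qed

lemma SS_grid: "SS a \<subseteq> dyadic_grid" using Gd_grid by (auto simp: SS_def)

lemma SS_sparse: "sparse (SS a)"
  unfolding sparse_def
proof (intro conjI ballI)
  show "SS a \<subseteq> dyadic_grid" by (rule SS_grid)
  fix Q assume "Q \<in> SS a"
  then obtain k where Qk: "Q \<in> Gd a k" by (auto simp: SS_def)
  hence Qg: "Q \<in> dyadic_grid" and Qa: "tt k < a Q" and QM: "Q \<in> Mx a k"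
    by (auto simp: Gd_def Mx_def Pk_def)
  define E where "E = EE a (k+1)"
  define U where "U = \<Union>{R \<in> SS a. R \<subset> Q}"
  have UE: "U \<subseteq> E"
  proof
    fix x assume "x \<in> U"
    then obtain R where R: "R \<in> SS a" "R \<subset> Q" "x \<in> R" by (auto simp: U_def)
    then obtain j where Rj: "R \<in> Gd a j" by (auto simp: SS_def)
    hence RM: "R \<in> Mx a j" and Ra: "tt j < a R" by (auto simp: Gd_def Mx_def Pk_def)
    have "k + 1 \<le> j"
    proof (rule ccontr)
      assume "\<not> k + 1 \<le> j"
      hence "tt j \<le> tt k" by (intro tt_mono) simp
      hence "Pk a j Q" using Qg Qa by (auto simp: Pk_def)
      hence "Q = R" using RM R(2) by (auto simp: Mx_def)
      thus False using R(2) by simp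
    qed
    hence "tt (k+1) < a R" using Ra tt_mono[of "k+1" j] by simp
    hence "Pk a (k+1) R" using RM by (auto simp: Mx_def Pk_def)
    thus "x \<in> E" using Pk_sub_EE R(3) by (auto simp: E_def)
  qed
  have Usets: "U \<in> sets lborel" unfolding U_def by (rule union_grid_sets) (use SS_grid in auto)
  have Qfin: "emeasure lborel Q \<noteq> \<infinity>" using grid_fin[OF Qg] by simp
  have Qf: "Q \<in> fmeasurable lborel" using grid_fin[OF Qg] Qg by (auto simp: fmeasurable_def)
  have "measure lborel Q / 2 \<le> measure lborel Q - measure lborel (Q \<inter> E)"
    using Qk by (auto simp: Gd_def E_def)
  also have "\<dots> = measure lborel (Q - Q \<inter> E)"
    by (rule measure_Diff[symmetric, OF Qfin]) (use Qg in \<open>auto simp: E_def\<close>)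
  also have "\<dots> \<le> measure lborel (Q - U)"
  proof (rule measure_mono_fmeasurable)
    show "Q - Q \<inter> E \<subseteq> Q - U" using UE by auto
    show "Q - Q \<inter> E \<in> sets lborel" using Qg by (auto simp: E_def)
    show "Q - U \<in> fmeasurable lborel" by (rule fmeasurableI2[OF Qf]) (use Usets Qg in auto)
  qed
  finally show "measure lborel Q / 2 \<le> measure lborel (Q - \<Union>{R \<in> SS a. R \<subset> Q})"
    by (simp add: U_def)
qed

lemma const8: "(3::ennreal) * (2 * (4/3 * y)) = 8 * y"
proof -
  have e: "(4/3::ennreal) = ennreal (4/3)" by (metis divide_ennreal ennreal_numeral zero_less_numeral zero_le_numeral)
  have "(3::ennreal) * (2 * (4/3 * y)) = (ennreal 3 * (ennreal 2 * ennreal (4/3))) * y"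
    by (simp only: e ennreal_numeral mult.assoc)
  also have "ennreal 3 * (ennreal 2 * ennreal (4/3)) = ennreal (3 * (2 * (4/3)))"
  proof -
    have a: "ennreal (2 * (4/3)) = ennreal 2 * ennreal (4/3)" by (rule ennreal_mult) auto
    have b: "ennreal (3 * (2*(4/3))) = ennreal 3 * ennreal (2*(4/3))" by (rule ennreal_mult) auto
    show ?thesis by (simp only: a b)
  qed
  also have "(3 * (2 * (4/3)) :: real) = 8" by simp
  finally show ?thesis by simp
qed

lemma hard_dir:
  assumes H: "(\<integral>\<^sup>+x. MD a dyadic_grid x \<partial>lborel) < \<infinity>"
  shows "\<exists>S. sparse S \<and> (\<integral>\<^sup>+x. MD a dyadic_grid x \<partial>lborel) \<le> 8 * (\<integral>\<^sup>+x. MD a S x \<partial>lborel)"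
proof (intro exI conjI)
  show "sparse (SS a)" by (rule SS_sparse)
  have "(\<integral>\<^sup>+x. MD a dyadic_grid x \<partial>lborel) \<le> 3 * TT a" by (rule H_le_TT)
  also have "\<dots> \<le> 3 * (2 * GS a)" by (rule mult_left_mono[OF TT_le_GS[OF H]]) simp
  also have "\<dots> \<le> 3 * (2 * (4/3 * (\<integral>\<^sup>+x. MD a (SS a) x \<partial>lborel)))"
    by (intro mult_left_mono GS_le) simp_all
  also have "\<dots> = 8 * (\<integral>\<^sup>+x. MD a (SS a) x \<partial>lborel)" by (rule const8)
  finally show "(\<integral>\<^sup>+x. MD a dyadic_grid x \<partial>lborel) \<le> 8 * (\<integral>\<^sup>+x. MD a (SS a) x \<partial>lborel)" .
qed



definition av :: "(real^'n::finite \<Rightarrow> real) \<Rightarrow> (real^'n) set \<Rightarrow> ennreal" where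
  "av f Q = ennreal \<bar>avg f Q\<bar>"

lemma sum_single: "(\<Sum>Q'\<in>{Q}. g Q') = (g Q :: ennreal)" by simp

lemma dyadic_max_MD:
  fixes f :: "real^'n::finite \<Rightarrow> real"
  shows "dyadic_max f x = MD (av f) dyadic_grid x"
proof (rule antisym)
  show "dyadic_max f x \<le> MD (av f) dyadic_grid x"
    unfolding dyadic_max_def
  proof (rule SUP_least)
    fix Q assume "Q \<in> {Q \<in> dyadic_grid. x \<in> Q}"
    thus "ennreal \<bar>avg f Q\<bar> \<le> MD (av f) dyadic_grid x"
      using MS_ge[of Q dyadic_grid x "av f"] by (simp add: av_def)
  qed
  show "MD (av f) dyadic_grid x \<le> dyadic_max f x"
    unfolding MD_def
  proof (rule SUP_least)
    fix Q :: "(real^'n) set" assume Q: "Q \<in> dyadic_grid"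
    show "av f Q * indicator Q x \<le> dyadic_max f x"
    proof (cases "x \<in> Q")
      case True
      thus ?thesis unfolding dyadic_max_def av_def using Q by (auto intro: SUP_upper2[of Q])
    qed simp
  qed
qed

lemma H1_MD: "H1_norm f = (\<integral>\<^sup>+x. MD (av f) dyadic_grid x \<partial>lborel)"
  by (simp add: H1_norm_def dyadic_max_MD)

lemma sparse_max_MD: "sparse_max S f x = MD (av f) S x"
  by (simp add: sparse_max_def MD_def av_def)

lemma sparse_max_le_op: "sparse_max S f x \<le> sparse_op S f x"
  unfolding sparse_max_def sparse_op_def
proof (rule SUP_least)
  fix Q assume "Q \<in> S"
  thus "ennreal \<bar>avg f Q\<bar> * indicator Q x \<le> (SUP F\<in>{F. finite F \<and> F \<subseteq> S}. \<Sum>Q\<in>F. ennreal \<bar>avg f Q\<bar> * indicator Q x)"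
    by (intro SUP_upper2[of "{Q}"]) (simp_all only: sum_single, auto)
qed

lemma sparse_op_le_B: "sparse_op S f x \<le> (\<integral>\<^sup>+Q. av f Q * indicator Q x \<partial>count_space S)"
  unfolding sparse_op_def
proof (rule SUP_least)
  fix F assume F: "F \<in> {F. finite F \<and> F \<subseteq> S}"
  have "(\<Sum>Q\<in>F. ennreal \<bar>avg f Q\<bar> * indicator Q x) = (\<integral>\<^sup>+Q. (av f Q * indicator Q x) * indicator F Q \<partial>count_space S)"
    using F by (subst nn_integral_count_space'[where A=F]) (auto simp: av_def)
  also have "\<dots> \<le> (\<integral>\<^sup>+Q. av f Q * indicator Q x \<partial>count_space S)"
    by (intro nn_integral_mono) (auto simp: indicator_def)
  finally show "(\<Sum>Q\<in>F. ennreal \<bar>avg f Q\<bar> * indicator Q x) \<le> (\<integral>\<^sup>+Q. av f Q * indicator Q x \<partial>count_space S)" .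
qed

definition EQ :: "(real^'n::finite) set set \<Rightarrow> (real^'n) set \<Rightarrow> (real^'n) set" where
  "EQ S Q = Q - \<Union>{R \<in> S. R \<subset> Q}"

lemma EQ_sets: "S \<subseteq> dyadic_grid \<Longrightarrow> Q \<in> dyadic_grid \<Longrightarrow> EQ S Q \<in> sets lborel"
  unfolding EQ_def by (intro sets.Diff grid_sets union_grid_sets) auto

lemma EQ_unique:
  assumes "S \<subseteq> dyadic_grid" "Q \<in> S" "Q' \<in> S" "x \<in> EQ S Q" "x \<in> EQ S Q'"
  shows "Q = Q'"
proof (rule ccontr)
  assume ne: "Q \<noteq> Q'"
  have "x \<in> Q" "x \<in> Q'" using assms(4,5) by (auto simp: EQ_def)
  hence "Q \<subseteq> Q' \<or> Q' \<subseteq> Q" using grid_nest assms(1-3) by blast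
  thus False
  proof
    assume "Q \<subseteq> Q'" hence "Q \<subset> Q'" using ne by auto
    thus False using assms \<open>x \<in> Q\<close> by (auto simp: EQ_def)
  next
    assume "Q' \<subseteq> Q" hence "Q' \<subset> Q" using ne by auto
    thus False using assms \<open>x \<in> Q'\<close> by (auto simp: EQ_def)
  qed
qed

lemma sparse_emeasure:
  assumes "sparse S" "Q \<in> S"
  shows "emeasure lborel Q \<le> 2 * emeasure lborel (EQ S Q)"
proof -
  have Sg: "S \<subseteq> dyadic_grid" using assms(1) by (simp add: sparse_def)
  hence Qg: "Q \<in> dyadic_grid" using assms(2) by blast
  have m: "measure lborel Q / 2 \<le> measure lborel (EQ S Q)"
    using assms by (simp add: sparse_def EQ_def)
  have le1: "emeasure lborel (EQ S Q) \<le> emeasure lborel Q"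
    by (intro emeasure_mono) (auto simp: EQ_def intro: grid_sets_borel[OF Qg])
  have "emeasure lborel (EQ S Q) < \<infinity>" using le1 grid_fin[OF Qg] by (rule le_less_trans)
  hence fin: "emeasure lborel (EQ S Q) = ennreal (measure lborel (EQ S Q))"
    by (intro emeasure_eq_ennreal_measure) simp
  have "emeasure lborel Q = ennreal (measure lborel Q)" by (rule grid_fmeas[OF Qg])
  also have "\<dots> \<le> ennreal (2 * measure lborel (EQ S Q))" using m by (intro ennreal_leI) simp
  also have "\<dots> = 2 * emeasure lborel (EQ S Q)" unfolding fin by (simp add: ennreal_mult)
  finally show ?thesis .
qed

lemma op_le_max:
  fixes a :: "(real^'n::finite) set \<Rightarrow> ennreal"
  assumes sp: "sparse S"
  shows "(\<integral>\<^sup>+x. (\<integral>\<^sup>+Q. a Q * indicator Q x \<partial>count_space S) \<partial>lborel) \<le> 2 * (\<integral>\<^sup>+x. MD a S x \<partial>lborel)"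
proof -
  have Sg: "S \<subseteq> dyadic_grid" using sp by (simp add: sparse_def)
  have cS: "countable S" using Sg by (rule countable_grid_subset)
  have Qs: "Q \<in> S \<Longrightarrow> Q \<in> sets lborel" for Q using Sg grid_sets by blast
  have Es: "Q \<in> S \<Longrightarrow> EQ S Q \<in> sets lborel" for Q using Sg EQ_sets by blast
  have "(\<integral>\<^sup>+x. (\<integral>\<^sup>+Q. a Q * indicator Q x \<partial>count_space S) \<partial>lborel)
     = (\<integral>\<^sup>+Q. (\<integral>\<^sup>+x. a Q * indicator Q x \<partial>lborel) \<partial>count_space S)"
    using Qs by (intro nn_integral_count_space_nn_integral cS) simp
  also have "\<dots> = (\<integral>\<^sup>+Q. a Q * emeasure lborel Q \<partial>count_space S)"
  proof (intro nn_integral_cong)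
    fix Q assume "Q \<in> space (count_space S)"
    hence "Q \<in> S" by simp
    thus "(\<integral>\<^sup>+x. a Q * indicator Q x \<partial>lborel) = a Q * emeasure lborel Q"
      using nn_integral_cmult_indicator[OF Qs[of Q], of "a Q"] by (simp only:)
  qed
  also have "\<dots> \<le> (\<integral>\<^sup>+Q. 2 * (a Q * emeasure lborel (EQ S Q)) \<partial>count_space S)"
  proof (intro nn_integral_mono)
    fix Q assume "Q \<in> space (count_space S)"
    hence "Q \<in> S" by simp
    hence "a Q * emeasure lborel Q \<le> a Q * (2 * emeasure lborel (EQ S Q))"
      by (intro mult_left_mono sparse_emeasure sp) simp_all
    thus "a Q * emeasure lborel Q \<le> 2 * (a Q * emeasure lborel (EQ S Q))"
      by (simp add: mult.left_commute)
  qed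
  also have "\<dots> = (\<integral>\<^sup>+Q. (\<integral>\<^sup>+x. 2 * (a Q * indicator (EQ S Q) x) \<partial>lborel) \<partial>count_space S)"
  proof (intro nn_integral_cong)
    fix Q assume "Q \<in> space (count_space S)"
    hence "Q \<in> S" by simp
    hence "(\<integral>\<^sup>+x. 2 * (a Q * indicator (EQ S Q) x) \<partial>lborel) = 2 * (\<integral>\<^sup>+x. a Q * indicator (EQ S Q) x \<partial>lborel)"
      using Es[of Q] by (intro nn_integral_cmult) simp
    also have "(\<integral>\<^sup>+x. a Q * indicator (EQ S Q) x \<partial>lborel) = a Q * emeasure lborel (EQ S Q)"
      using nn_integral_cmult_indicator[OF Es[OF \<open>Q \<in> S\<close>], of "a Q"] by (simp only:)
    finally show "2 * (a Q * emeasure lborel (EQ S Q)) = (\<integral>\<^sup>+x. 2 * (a Q * indicator (EQ S Q) x) \<partial>lborel)" by simp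
  qed
  also have "\<dots> = (\<integral>\<^sup>+x. (\<integral>\<^sup>+Q. 2 * (a Q * indicator (EQ S Q) x) \<partial>count_space S) \<partial>lborel)"
    using Es by (intro nn_integral_count_space_nn_integral[symmetric] cS) simp
  also have "\<dots> \<le> (\<integral>\<^sup>+x. 2 * MD a S x \<partial>lborel)"
  proof (intro nn_integral_mono)
    fix x
    show "(\<integral>\<^sup>+Q. 2 * (a Q * indicator (EQ S Q) x) \<partial>count_space S) \<le> 2 * MD a S x"
    proof (cases "\<exists>Q0\<in>S. x \<in> EQ S Q0")
      case True
      then obtain Q0 where Q0: "Q0 \<in> S" "x \<in> EQ S Q0" by blast
      have "(\<integral>\<^sup>+Q. 2 * (a Q * indicator (EQ S Q) x) \<partial>count_space S) = (\<Sum>Q\<in>{Q0}. 2 * (a Q * indicator (EQ S Q) x))"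
      proof (rule nn_integral_count_space')
        fix Q assume "Q \<in> S" "Q \<notin> {Q0}"
        hence "x \<notin> EQ S Q" using EQ_unique[OF Sg _ Q0(1) _ Q0(2)] by blast
        thus "2 * (a Q * indicator (EQ S Q) x) = 0" by simp
      qed (use Q0 in auto)
      also have "\<dots> = 2 * a Q0" using Q0 by simp
      also have "\<dots> \<le> 2 * MD a S x"
        using Q0 by (intro mult_left_mono MS_ge) (auto simp: EQ_def)
      finally show ?thesis .
    next
      case False
      have "(\<integral>\<^sup>+Q. 2 * (a Q * indicator (EQ S Q) x) \<partial>count_space S) = (\<Sum>Q\<in>{}. 2 * (a Q * indicator (EQ S Q) x))"
        by (rule nn_integral_count_space') (use False in auto)
      thus ?thesis by simp
    qed
  qed
  also have "\<dots> = 2 * (\<integral>\<^sup>+x. MD a S x \<partial>lborel)"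
    by (rule nn_integral_cmult) (use MD_meas[OF Sg] in simp)
  finally show ?thesis .
qed

lemma op_le_max_f:
  assumes "sparse S"
  shows "(\<integral>\<^sup>+x. sparse_op S f x \<partial>lborel) \<le> 2 * (\<integral>\<^sup>+x. sparse_max S f x \<partial>lborel)"
proof -
  have "(\<integral>\<^sup>+x. sparse_op S f x \<partial>lborel) \<le> (\<integral>\<^sup>+x. (\<integral>\<^sup>+Q. av f Q * indicator Q x \<partial>count_space S) \<partial>lborel)"
    by (intro nn_integral_mono sparse_op_le_B)
  also have "\<dots> \<le> 2 * (\<integral>\<^sup>+x. MD (av f) S x \<partial>lborel)" by (rule op_le_max[OF assms])
  finally show ?thesis by (simp add: sparse_max_MD)
qed

theorem theoremB:
  "\<exists>C::real. C > 0 \<and>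
     (\<forall>f :: real^'n::finite \<Rightarrow> real. loc_integrable f \<and> H1_norm f < \<infinity> \<longrightarrow>
        H1_norm f \<le> ennreal C * sup_sparse_max f \<and>
        sup_sparse_max f \<le> ennreal C * H1_norm f \<and>
        sup_sparse_max f \<le> ennreal C * sup_sparse_op f \<and>
        sup_sparse_op f \<le> ennreal C * sup_sparse_max f)"
proof (intro exI[of _ 8] conjI allI impI)
  show "(0::real) < 8" by simp
  fix f :: "real^'n::finite \<Rightarrow> real"
  assume "loc_integrable f \<and> H1_norm f < \<infinity>"
  hence Hf: "H1_norm f < \<infinity>" by simp
  have e8: "ennreal 8 = 8" by simp
  have le8: "y \<le> 8 * y" for y :: ennreal
  proof -
    have "1 * y \<le> 8 * y" by (intro mult_right_mono) simp_all
    thus ?thesis by simp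
  qed
  have maxle: "(\<integral>\<^sup>+x. sparse_max S f x \<partial>lborel) \<le> sup_sparse_max f" if "sparse S" for S :: "(real^'n) set set"
    unfolding sup_sparse_max_def using that by (intro SUP_upper) simp
  have ople: "(\<integral>\<^sup>+x. sparse_op S f x \<partial>lborel) \<le> sup_sparse_op f" if "sparse S" for S :: "(real^'n) set set"
    unfolding sup_sparse_op_def using that by (intro SUP_upper) simp
  have "H1_norm f < \<infinity>" by (rule Hf)
  hence "(\<integral>\<^sup>+x. MD (av f) dyadic_grid x \<partial>lborel) < \<infinity>" by (simp add: H1_MD)
  from hard_dir[OF this] obtain S where S: "sparse S"
    "(\<integral>\<^sup>+x. MD (av f) dyadic_grid x \<partial>lborel) \<le> 8 * (\<integral>\<^sup>+x. MD (av f) S x \<partial>lborel)" by blast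
  have "H1_norm f \<le> 8 * (\<integral>\<^sup>+x. sparse_max S f x \<partial>lborel)"
    using S(2) by (simp add: H1_MD sparse_max_MD)
  also have "\<dots> \<le> 8 * sup_sparse_max f" by (intro mult_left_mono maxle S(1)) simp
  finally show "H1_norm f \<le> ennreal 8 * sup_sparse_max f" by (simp only: e8)
  have "sup_sparse_max f \<le> H1_norm f"
    unfolding sup_sparse_max_def
  proof (rule SUP_least)
    fix S :: "(real^'n) set set" assume "S \<in> {S. sparse S}"
    hence Sg: "S \<subseteq> dyadic_grid" by (simp add: sparse_def)
    have "(\<integral>\<^sup>+x. sparse_max S f x \<partial>lborel) = (\<integral>\<^sup>+x. MD (av f) S x \<partial>lborel)" by (simp add: sparse_max_MD)
    also have "\<dots> \<le> (\<integral>\<^sup>+x. MD (av f) dyadic_grid x \<partial>lborel)"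
      unfolding MD_def by (intro nn_integral_mono SUP_subset_mono Sg order.refl)
    finally show "(\<integral>\<^sup>+x. sparse_max S f x \<partial>lborel) \<le> H1_norm f" by (simp add: H1_MD)
  qed
  thus "sup_sparse_max f \<le> ennreal 8 * H1_norm f" using le8[of "H1_norm f"] by (simp only: e8)
  have "sup_sparse_max f \<le> sup_sparse_op f"
    unfolding sup_sparse_max_def
  proof (rule SUP_least)
    fix S :: "(real^'n) set set" assume "S \<in> {S. sparse S}"
    hence "sparse S" by simp
    have "(\<integral>\<^sup>+x. sparse_max S f x \<partial>lborel) \<le> (\<integral>\<^sup>+x. sparse_op S f x \<partial>lborel)"
      by (intro nn_integral_mono sparse_max_le_op)
    also have "\<dots> \<le> sup_sparse_op f" by (rule ople[OF \<open>sparse S\<close>])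
    finally show "(\<integral>\<^sup>+x. sparse_max S f x \<partial>lborel) \<le> sup_sparse_op f" .
  qed
  thus "sup_sparse_max f \<le> ennreal 8 * sup_sparse_op f" using le8[of "sup_sparse_op f"] by (simp only: e8)
  have "sup_sparse_op f \<le> 2 * sup_sparse_max f"
    unfolding sup_sparse_op_def
  proof (rule SUP_least)
    fix S :: "(real^'n) set set" assume "S \<in> {S. sparse S}"
    hence "sparse S" by simp
    have "(\<integral>\<^sup>+x. sparse_op S f x \<partial>lborel) \<le> 2 * (\<integral>\<^sup>+x. sparse_max S f x \<partial>lborel)"
      by (rule op_le_max_f[OF \<open>sparse S\<close>])
    also have "\<dots> \<le> 2 * sup_sparse_max f" by (intro mult_left_mono maxle \<open>sparse S\<close>) simp
    finally show "(\<integral>\<^sup>+x. sparse_op S f x \<partial>lborel) \<le> 2 * sup_sparse_max f" .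
  qed
  also have "2 * sup_sparse_max f \<le> 8 * sup_sparse_max f" by (intro mult_right_mono) simp_all
  finally show "sup_sparse_op f \<le> ennreal 8 * sup_sparse_max f" by (simp only: e8)
qed


end
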